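(* Let $T$ be a positive integer, $f:\mathbb{R}^{T}\to\mathbb{R}$ differentiable with $\mathrm{prog}(\nabla f(x))\le\mathrm{prog}(x)+1$ for all $x$, $0<\tau_1\le\dots\le\tau_n$, $p\in(0,1]$, and let the oracle be $O=O^G_{\tau_1,\dots,\tau_n}$ with $\mathcal{D}=\mathrm{Bernoulli}(p)^{\otimes n}$ and $$[G(x;\xi)]_j=\nabla_jf(x)\Big(1+\mathbb{1}[j>\mathrm{prog}(x)]\Big(\frac\xi p-1\Big)\Big),\quad \xi\in\{0,1\},\ j\in[T].$$ Let $A$ be a zero-respecting algorithm run in the time oracle protocol with this oracle. Then for every $\delta\in(0,1]$ and every $t\ge0$ with $$t\le\frac12\min_{m\in[n]}\tau_m\Big(1+\frac1{4pm}\Big)\Big(\frac T2+\log\delta\Big),$$ with probability at least $1-\delta$ we have $\mathrm{prog}(x^k)<T$ for all $k\in S_t$.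
   Context: $\mathrm{prog}(x)=\max\{i\ge0:x_i\ne0\}$ with convention $x_0\equiv1$; $\mathrm{supp}(x)=\{i:x_i\ne0\}$; $\mathbb{N}_0=\{0,1,\dots\}$. Time oracle protocol (single oracle). An algorithm is $A^0\in\mathbb{R}_{\ge0}\times\mathbb{R}^d$ and $A^k:(\mathbb{R}^d)^k\to\mathbb{R}_{\ge0}\times\mathbb{R}^d$ ($k\ge1$) such that the first (time) component of $A^k(g^1,\dots,g^k)$ is at least that of $A^{k-1}(g^1,\dots,g^{k-1})$. Set $t^0=0$ and oracle state $s^0=(0,0,0)\in\mathbb{R}_{\ge0}\times\mathbb{R}^d\times\{0,1\}$. For $k=0,1,\dots$: $(t^{k+1},x^k)=A^k(g^1,\dots,g^k)$; draw $\xi^{k+1}=(\xi^{k+1}_1,\dots,\xi^{k+1}_n)\sim\mathcal{D}$ independently of the past; $(s^{k+1},g^{k+1})=O(t^{k+1},x^k,s^k,\xi^{k+1})$. $S_t=\{k\in\mathbb{N}_0:t^k\le t\}$. Zero-respecting: $\mathrm{supp}(x^k)\subseteq\bigcup_{j=1}^k\mathrm{supp}(g^j)$ for all $k$ and all realizations. Synchronized oracle: for a mapping $G$, $O^G_{\tau_1,\dots,\tau_n}(t,x,(s_t,s_x,s_q),(\xi_1,\dots,\xi_n))$ returns $((t,x,1),0)$ if $s_q=0$, and if $s_q=1$ returns $\big((0,0,0),\sum_{i\in[n]:\,s_t+\tau_i\le t}G(s_x;\xi_i)\big)$ (empty sum $=0$). *)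

theory Defs
  imports "HOL-Probability.Probability"
begin

text \<open>Vectors in R^T are modelled as real^'n with 'n a finite linearly ordered index
type, T = CARD('n); coordinate j has (1-based) position rank j.\<close>

definition rank :: "'n::{finite,linorder} \<Rightarrow> nat" where
  "rank j = card {i. i \<le> j}"

definition supp :: "real^'n \<Rightarrow> 'n set" where
  "supp x = {j. x $ j \<noteq> 0}"

definition prog :: "real^'n::{finite,linorder} \<Rightarrow> nat" where
  "prog x = Max (insert 0 (rank ` supp x))"

definition grad :: "(real^'n \<Rightarrow> real) \<Rightarrow> real^'n \<Rightarrow> real^'n" where
  "grad f x = (\<chi> j. frechet_derivative f (at x) (axis j 1))"

type_synonym 'n ostate = "real \<times> (real^'n) \<times> bool"

text \<open>Synchronized oracle O^G_{tau_1..tau_n}; the random draw is xi :: nat => bool,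
  xi i being the i-th component (i in 1..n); state component s_q is a bool (False = 0).\<close>
definition sync_oracle ::
  "(real^'n \<Rightarrow> bool \<Rightarrow> real^'n) \<Rightarrow> (nat \<Rightarrow> real) \<Rightarrow> nat \<Rightarrow>
   real \<Rightarrow> real^'n \<Rightarrow> 'n ostate \<Rightarrow> (nat \<Rightarrow> bool) \<Rightarrow> 'n ostate \<times> (real^'n)" where
  "sync_oracle G \<tau> n t x s \<xi> =
     (case s of (st, sx, sq) \<Rightarrow>
       if \<not> sq then ((t, x, True), 0)
       else ((0, 0, False), (\<Sum>i\<in>{i\<in>{1..n}. st + \<tau> i \<le> t}. G sx (\<xi> i))))"

text \<open>Algorithm: A gs = A^k(g^1,...,g^k) for gs = [g^1,...,g^k] (A [] = A^0).\<close>
definition is_algorithm :: "((real^'n) list \<Rightarrow> real \<times> (real^'n)) \<Rightarrow> bool" where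
  "is_algorithm A \<longleftrightarrow> (\<forall>gs. fst (A gs) \<ge> 0) \<and> (\<forall>gs g. fst (A gs) \<le> fst (A (gs @ [g])))"

text \<open>protocol_run A Orc xi k = ([g^1,...,g^k], s^k), with xi (k+1) the draw xi^{k+1}.\<close>
fun protocol_run ::
  "((real^'n) list \<Rightarrow> real \<times> (real^'n)) \<Rightarrow>
   (real \<Rightarrow> real^'n \<Rightarrow> 'n ostate \<Rightarrow> (nat \<Rightarrow> bool) \<Rightarrow> 'n ostate \<times> (real^'n)) \<Rightarrow>
   (nat \<Rightarrow> nat \<Rightarrow> bool) \<Rightarrow> nat \<Rightarrow> ((real^'n) list) \<times> 'n ostate" where
  "protocol_run A Orc \<xi> 0 = ([], (0, 0, False))"
| "protocol_run A Orc \<xi> (Suc k) =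
     (let (gs, s) = protocol_run A Orc \<xi> k;
          (t', x) = A gs;
          (s', g) = Orc t' x s (\<xi> (Suc k))
      in (gs @ [g], s'))"

definition iterate_x where
  "iterate_x A Orc \<xi> k = snd (A (fst (protocol_run A Orc \<xi> k)))"

definition iterate_t where
  "iterate_t A Orc \<xi> k = (if k = 0 then 0 else fst (A (fst (protocol_run A Orc \<xi> (k - 1)))))"

definition zero_respecting where
  "zero_respecting A Orc \<longleftrightarrow>
     (\<forall>\<xi> k. supp (iterate_x A Orc \<xi> k) \<subseteq> (\<Union>g\<in>set (fst (protocol_run A Orc \<xi> k)). supp g))"

definition G_bern :: "real \<Rightarrow> ((real,'n::{finite,linorder}) vec \<Rightarrow> real) \<Rightarrow> (real,'n) vec \<Rightarrow> bool \<Rightarrow> (real,'n) vec" where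
  "G_bern p f x \<xi> = (\<chi> j. grad f x $ j *
      (1 + (if rank j > prog x then (if \<xi> then 1 else 0) / p - 1 else 0)))"

definition draw_space :: "real \<Rightarrow> nat \<Rightarrow> (nat \<Rightarrow> nat \<Rightarrow> bool) measure" where
  "draw_space p n = PiM UNIV (\<lambda>k. PiM {1..n} (\<lambda>i. measure_pmf (bernoulli_pmf p)))"

end

theory Submission
  imports Defs
begin


lemma pr_Suc: "protocol_run A Orc \<xi> (Suc k) =
  (fst (protocol_run A Orc \<xi> k) @ [snd (Orc (fst (A (fst (protocol_run A Orc \<xi> k)))) (snd (A (fst (protocol_run A Orc \<xi> k)))) (snd (protocol_run A Orc \<xi> k)) (\<xi> (Suc k)))],
   fst (Orc (fst (A (fst (protocol_run A Orc \<xi> k)))) (snd (A (fst (protocol_run A Orc \<xi> k)))) (snd (protocol_run A Orc \<xi> k)) (\<xi> (Suc k))))"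
  by (simp add: split_def Let_def)

lemma pr_dep: "(\<forall>j\<le>k. \<xi> j = \<xi>' j) \<Longrightarrow> protocol_run A Orc \<xi> k = protocol_run A Orc \<xi>' k"
  by (induction k) (simp_all only: pr_Suc, auto)

lemma it_Suc: "iterate_t A Orc \<xi> (Suc k) = fst (A (fst (protocol_run A Orc \<xi> k)))"
  by (simp add: iterate_t_def)

lemma it_mono: assumes "is_algorithm A" shows "iterate_t A Orc \<xi> k \<le> iterate_t A Orc \<xi> (Suc k)"
proof (cases k)
  case 0 then show ?thesis using assms by (simp add: iterate_t_def is_algorithm_def)
next
  case (Suc m) then show ?thesis using assms unfolding is_algorithm_def
    by (simp add: it_Suc pr_Suc del: protocol_run.simps)
qed

lemma it_mono': assumes "is_algorithm A" "k \<le> l" shows "iterate_t A Orc \<xi> k \<le> iterate_t A Orc \<xi> l"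
  using assms(2) by (induction l rule: dec_induct) (auto intro: order_trans it_mono[OF assms(1)])

lemma it_nonneg: assumes "is_algorithm A" shows "0 \<le> iterate_t A Orc \<xi> k"
  using assms by (simp add: iterate_t_def is_algorithm_def)

lemma sync_F: "sync_oracle G \<tau> n t x (st, sx, False) \<xi> = ((t, x, True), 0)"
  by (simp add: sync_oracle_def)
lemma sync_T: "sync_oracle G \<tau> n t x (st, sx, True) \<xi> = ((0, 0, False), (\<Sum>i\<in>{i\<in>{1..n}. st + \<tau> i \<le> t}. G sx (\<xi> i)))"
  by (simp add: sync_oracle_def)

lemma sync_state: "snd (protocol_run A (sync_oracle G \<tau> n) \<xi> k) =
  (if even k then (0,0,False) else (iterate_t A (sync_oracle G \<tau> n) \<xi> k, iterate_x A (sync_oracle G \<tau> n) \<xi> (k-1), True))"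
proof (induction k)
  case 0 then show ?case by simp
next
  case (Suc k)
  show ?case
  proof (cases "even k")
    case True
    then show ?thesis using Suc
      by (simp add: pr_Suc it_Suc iterate_x_def sync_F sync_T del: protocol_run.simps)
  next
    case False
    then show ?thesis using Suc
      by (simp add: pr_Suc it_Suc iterate_x_def sync_F sync_T del: protocol_run.simps)
  qed
qed

lemma sync_g: "fst (protocol_run A (sync_oracle G \<tau> n) \<xi> (Suc k)) =
  fst (protocol_run A (sync_oracle G \<tau> n) \<xi> k) @
   [if even k then 0 else
    (\<Sum>i\<in>{i\<in>{1..n}. iterate_t A (sync_oracle G \<tau> n) \<xi> k + \<tau> i \<le> iterate_t A (sync_oracle G \<tau> n) \<xi> (Suc k)}.
        G (iterate_x A (sync_oracle G \<tau> n) \<xi> (k-1)) (\<xi> (Suc k) i))]"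
  by (simp add: pr_Suc sync_state it_Suc sync_F sync_T del: protocol_run.simps)


lemma prog_ge: "j \<in> supp x \<Longrightarrow> rank j \<le> prog x"
  unfolding prog_def by (intro Max_ge) auto

lemma prog_le: "(\<And>j. j \<in> supp x \<Longrightarrow> rank j \<le> N) \<Longrightarrow> prog x \<le> N"
  unfolding prog_def by (intro Max.boundedI) auto

lemma supp_sum: "j \<in> supp (sum v S) \<Longrightarrow> \<exists>i\<in>S. j \<in> supp (v i)"
  unfolding supp_def by (auto intro: ccontr simp: sum.neutral)

lemma supp_zero[simp]: "supp 0 = {}" by (simp add: supp_def)

lemma G_supp:
  assumes "prog (grad f x) \<le> prog x + 1" "j \<in> supp (G_bern p f x b)"
  shows "rank j \<le> prog x + (if b then 1 else 0)"
proof (rule ccontr)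
  assume c: "\<not> ?thesis"
  have nz: "grad f x $ j * (1 + (if rank j > prog x then (if b then 1 else 0) / p - 1 else 0)) \<noteq> 0"
    using assms(2) by (simp add: supp_def G_bern_def)
  show False
  proof (cases "rank j > prog x + 1")
    case True
    have "j \<in> supp (grad f x)" using nz by (auto simp: supp_def)
    then have "rank j \<le> prog (grad f x)" by (rule prog_ge)
    then show False using True assms(1) by simp
  next
    case False
    then have "rank j = prog x + 1" "\<not> b" using c by (auto split: if_splits)
    then show False using nz by simp
  qed
qed


locale ctx =
  fixes f :: "(real,'n::{finite,linorder}) vec \<Rightarrow> real" and \<tau> :: "nat \<Rightarrow> real" and n :: nat
    and p :: real and A :: "((real,'n) vec) list \<Rightarrow> real \<times> ((real,'n) vec)" and tcap :: real
  assumes gradprog: "\<forall>x. prog (grad f x) \<le> prog x + 1"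
    and alg: "is_algorithm A"
    and zr: "zero_respecting A (sync_oracle (G_bern p f) \<tau> n)"
begin

abbreviation "Orc \<equiv> sync_oracle (G_bern p f) \<tau> n"
abbreviation "tt \<xi> k \<equiv> iterate_t A Orc \<xi> k"
abbreviation "xx \<xi> k \<equiv> iterate_x A Orc \<xi> k"
definition "U \<xi> k = (\<Union>g\<in>set (fst (protocol_run A Orc \<xi> k)). supp g)"

definition succ :: "(nat \<Rightarrow> nat \<Rightarrow> bool) \<Rightarrow> nat \<Rightarrow> bool" where
  "succ \<xi> k \<longleftrightarrow> odd k \<and> tt \<xi> (Suc k) \<le> tcap \<and> (\<exists>i\<in>{1..n}. tt \<xi> k + \<tau> i \<le> tt \<xi> (Suc k) \<and> \<xi> (Suc k) i)"

primrec Q :: "(nat \<Rightarrow> nat \<Rightarrow> bool) \<Rightarrow> nat \<Rightarrow> nat" where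
  "Q \<xi> 0 = 0"
| "Q \<xi> (Suc k) = Q \<xi> k + (if succ \<xi> k then 1 else 0)"

lemma Q_mono: "k \<le> l \<Longrightarrow> Q \<xi> k \<le> Q \<xi> l"
  by (induction l rule: dec_induct) auto

lemma U_Suc: "U \<xi> (Suc k) = U \<xi> k \<union> supp (if even k then 0 else
    (\<Sum>i\<in>{i\<in>{1..n}. tt \<xi> k + \<tau> i \<le> tt \<xi> (Suc k)}. G_bern p f (xx \<xi> (k-1)) (\<xi> (Suc k) i)))"
  unfolding U_def by (simp only: sync_g) auto

lemma U_mono: "k \<le> l \<Longrightarrow> U \<xi> k \<subseteq> U \<xi> l"
  by (induction l rule: dec_induct) (auto simp: U_Suc)

lemma supp_xx: "supp (xx \<xi> k) \<subseteq> U \<xi> k"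
  using zr unfolding zero_respecting_def U_def by blast

lemma claim: "tt \<xi> k \<le> tcap \<Longrightarrow> \<forall>j\<in>U \<xi> k. rank j \<le> Q \<xi> k"
proof (induction k)
  case 0 then show ?case by (simp add: U_def)
next
  case (Suc k)
  have tk: "tt \<xi> k \<le> tcap" using Suc.prems it_mono[OF alg, of Orc \<xi> k] by simp
  note IH = Suc.IH[OF tk]
  show ?case
  proof
    fix j assume j: "j \<in> U \<xi> (Suc k)"
    show "rank j \<le> Q \<xi> (Suc k)"
    proof (cases "j \<in> U \<xi> k")
      case True then show ?thesis using IH by auto
    next
      case False
      then have ok: "odd k" and "j \<in> supp (\<Sum>i\<in>{i\<in>{1..n}. tt \<xi> k + \<tau> i \<le> tt \<xi> (Suc k)}. G_bern p f (xx \<xi> (k-1)) (\<xi> (Suc k) i))"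
        using j by (auto simp: U_Suc split: if_splits)
      then obtain i where i: "i \<in> {1..n}" "tt \<xi> k + \<tau> i \<le> tt \<xi> (Suc k)"
        and ji: "j \<in> supp (G_bern p f (xx \<xi> (k-1)) (\<xi> (Suc k) i))"
        by (auto dest: supp_sum)
      have r: "rank j \<le> prog (xx \<xi> (k-1)) + (if \<xi> (Suc k) i then 1 else 0)"
        using G_supp[OF _ ji] gradprog by blast
      have "prog (xx \<xi> (k-1)) \<le> Q \<xi> k"
      proof (rule prog_le)
        fix j' assume "j' \<in> supp (xx \<xi> (k-1))"
        then have "j' \<in> U \<xi> k" using supp_xx[of \<xi> "k-1"] U_mono[of "k-1" k \<xi>] by auto
        then show "rank j' \<le> Q \<xi> k" using IH by auto
      qed
      moreover have "\<xi> (Suc k) i \<Longrightarrow> succ \<xi> k"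
        unfolding succ_def using ok i Suc.prems by auto
      ultimately show ?thesis using r by (auto split: if_splits)
    qed
  qed
qed

lemma prog_xx_le: "tt \<xi> k \<le> tcap \<Longrightarrow> prog (xx \<xi> k) \<le> Q \<xi> k"
  using claim supp_xx by (intro prog_le) blast

end


definition Bm :: "real \<Rightarrow> nat \<Rightarrow> (nat \<Rightarrow> bool) measure" where
  "Bm p n = PiM {1..n} (\<lambda>i. measure_pmf (bernoulli_pmf p))"

lemma draw_space_eq: "draw_space p n = PiM UNIV (\<lambda>k. Bm p n)"
  by (simp add: draw_space_def Bm_def)

lemma prob_Bm: "prob_space (Bm p n)"
  unfolding Bm_def by (intro prob_space_PiM) (simp add: prob_space_measure_pmf)

lemma space_Bm: "space (Bm p n) = PiE {1..n} (\<lambda>_. UNIV)"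
  by (simp add: Bm_def space_PiM)

lemma finite_space_Bm: "finite (space (Bm p n))"
  by (simp add: space_Bm finite_PiE)

lemma singleton_PiM:
  assumes "finite I" "x \<in> space (PiM I M)" "\<And>i. i \<in> I \<Longrightarrow> {x i} \<in> sets (M i)"
  shows "{x} \<in> sets (PiM I M)"
proof -
  have "{x} = PiE I (\<lambda>i. {x i})"
    using assms(2) by (auto simp: space_PiM PiE_iff extensional_def fun_eq_iff) (metis)
  then show ?thesis using assms by (auto intro!: sets_PiM_I_finite)
qed

lemma all_sets:
  assumes "finite (space N)" "\<And>x. x \<in> space N \<Longrightarrow> {x} \<in> sets N" "S \<subseteq> space N"
  shows "S \<in> sets N"
proof -
  have "S = (\<Union>x\<in>S. {x})" by auto
  also have "\<dots> \<in> sets N"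
    using assms finite_subset[OF assms(3) assms(1)] by (intro sets.finite_UN) auto
  finally show ?thesis .
qed

lemma Bm_sets: "S \<subseteq> space (Bm p n) \<Longrightarrow> S \<in> sets (Bm p n)"
  by (rule all_sets[OF finite_space_Bm]) (auto simp: Bm_def intro!: singleton_PiM)

lemma space_PiB: "space (PiM K (\<lambda>_. Bm p n)) = PiE K (\<lambda>_. space (Bm p n))"
  by (simp add: space_PiM)

lemma PiB_sets: "finite K \<Longrightarrow> S \<subseteq> space (PiM K (\<lambda>_. Bm p n)) \<Longrightarrow> S \<in> sets (PiM K (\<lambda>_. Bm p n))"
  by (rule all_sets) (auto simp: space_PiB finite_space_Bm finite_PiE intro!: singleton_PiM Bm_sets simp del: space_PiM)

lemma PiB_meas: "finite K \<Longrightarrow> (g :: _ \<Rightarrow> ennreal) \<in> borel_measurable (PiM K (\<lambda>_. Bm p n))"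
  by (rule measurableI) (auto intro!: PiB_sets)

lemma Bm_single:
  assumes "i \<in> {1..n}" "0 \<le> p" "p \<le> 1"
  shows "measure (Bm p n) {y \<in> space (Bm p n). y i} = p"
proof -
  interpret product_prob_space "\<lambda>_. measure_pmf (bernoulli_pmf p)" "{1..n}"
    by unfold_locales
  have "emeasure (Bm p n) {y \<in> space (Bm p n). y i \<in> {True}} = emeasure (measure_pmf (bernoulli_pmf p)) {True}"
    unfolding Bm_def using assms by (intro emeasure_PiM_Collect_single) auto
  then have "emeasure (Bm p n) {y \<in> space (Bm p n). y i} = ennreal p"
    using assms by (simp add: emeasure_pmf_single)
  then show ?thesis using assms by (simp add: measure_def)
qed

lemma tau_mono:
  assumes "\<forall>i\<in>{1..<n}. \<tau> i \<le> \<tau> (Suc i)" "1 \<le> i" "i \<le> j" "j \<le> n"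
  shows "\<tau> i \<le> (\<tau> j :: real)"
  using assms(3,4)
proof (induction j rule: dec_induct)
  case base then show ?case by simp
next
  case (step j)
  have "j \<in> {1..<n}" using step assms(2) by auto
  then have "\<tau> j \<le> \<tau> (Suc j)" using assms(1) by blast
  then show ?case using step by simp
qed
lemma Sset_card:
  assumes mono: "\<forall>i\<in>{1..<n}. \<tau> i \<le> \<tau> (Suc i)" and Sd: "S = {i\<in>{1..n}. a + \<tau> i \<le> (b::real)}" and ne: "S \<noteq> {}"
  shows "card S \<in> S"
proof -
  have fin: "finite S" unfolding Sd by simp
  define M0 where "M0 = Max S"
  have M0S: "M0 \<in> S" unfolding M0_def using fin ne by (rule Max_in)
  have le: "i \<le> M0" if "i \<in> S" for i unfolding M0_def using fin that by (rule Max_ge)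
  have M0n: "M0 \<le> n" and M0b: "a + \<tau> M0 \<le> b" using M0S unfolding Sd by auto
  have "S = {1..M0}"
  proof
    show "S \<subseteq> {1..M0}"
    proof
      fix i assume i: "i \<in> S"
      then have "1 \<le> i" unfolding Sd by simp
      then show "i \<in> {1..M0}" using le[OF i] by simp
    qed
    show "{1..M0} \<subseteq> S"
    proof
      fix i assume i: "i \<in> {1..M0}"
      have "\<tau> i \<le> \<tau> M0" using tau_mono[OF mono, of i M0] i M0n by simp
      then have "a + \<tau> i \<le> b" using M0b by simp
      then show "i \<in> S" using i M0n unfolding Sd by simp
    qed
  qed
  then have "card S = M0" by simp
  then show ?thesis using M0S by simp
qed
lemma num_bound: "(x::real) > 0 \<Longrightarrow> min 1 x \<le> 8 * x / (4 * x + 1)"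
proof (cases "x \<le> 1")
  case True
  assume x: "x > 0"
  have "x \<le> 8 * x / (4 * x + 1)" using x True by (simp add: field_simps)
  then show ?thesis using True by simp
next
  case False
  assume x: "x > 0"
  have "1 \<le> 8 * x / (4 * x + 1)" using x False by (simp add: field_simps)
  then show ?thesis using False by simp
qed

lemma aux_eq: "(x::real) > 0 \<Longrightarrow> t > 0 \<Longrightarrow> 8 * x / (4 * x + 1) = 2 * t / (t * (1 + 1 / (4 * x)))"
proof -
  assume x: "x > 0" and t: "t > 0"
  have "t * (1 + 1 / (4 * x)) = t * (4 * x + 1) / (4 * x)" using x by (simp add: field_simps)
  then have "2 * t / (t * (1 + 1 / (4 * x))) = 2 * t * (4 * x) / (t * (4 * x + 1))"
    using x t by simp
  also have "\<dots> = (t * (8 * x)) / (t * (4 * x + 1))" by (simp add: mult_ac)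
  also have "\<dots> = 8 * x / (4 * x + 1)" using t by (intro nonzero_mult_divide_mult_cancel_left) simp
  finally show ?thesis by simp
qed

lemma step_bound:
  assumes p: "0 < p" "p \<le> 1" and mono: "\<forall>i\<in>{1..<n}. \<tau> i \<le> \<tau> (Suc i)" and t1: "0 < \<tau> 1"
    and C: "C > 0" "\<forall>m\<in>{1..n}. C \<le> \<tau> m * (1 + 1 / (4 * p * real m))" and ab: "a \<le> b"
  shows "1 + measure (Bm p n) {y\<in>space (Bm p n). \<exists>i\<in>{i\<in>{1..n}. a + \<tau> i \<le> b}. y i} \<le> exp (2 / C * (b - a))"
proof -
  interpret B: prob_space "Bm p n" by (rule prob_Bm)
  define S where "S = {i\<in>{1..n}. a + \<tau> i \<le> b}"
  define q where "q = measure (Bm p n) {y\<in>space (Bm p n). \<exists>i\<in>S. y i}"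
  have q1: "q \<le> 1" unfolding q_def by simp
  have "1 + q \<le> 1 + 2 / C * (b - a)"
  proof (cases "S = {}")
    case True
    then have "q = 0" unfolding q_def by simp
    then show ?thesis using C ab by simp
  next
    case False
    define m where "m = card S"
    have mS: "m \<in> S" using Sset_card[OF mono S_def False] by (simp add: m_def)
    then have "m \<in> {i\<in>{1..n}. a + \<tau> i \<le> b}" by (simp only: S_def)
    then have m1: "1 \<le> m" "m \<le> n" and tm: "\<tau> m \<le> b - a" by auto
    have tpos: "0 < \<tau> m" using tau_mono[OF mono, of 1 m] m1 t1 by simp
    have Sn: "S \<subseteq> {1..n}" unfolding S_def by auto
    have finS: "finite S" unfolding S_def by simp
    have eq: "{y\<in>space (Bm p n). \<exists>i\<in>S. y i} = (\<Union>i\<in>S. {y\<in>space (Bm p n). y i})" by blast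
    have sets: "(\<lambda>i. {y\<in>space (Bm p n). y i}) ` S \<subseteq> sets (Bm p n)"
      by (intro image_subsetI Bm_sets) auto
    have "q \<le> (\<Sum>i\<in>S. measure (Bm p n) {y\<in>space (Bm p n). y i})"
      unfolding q_def eq by (rule B.finite_measure_subadditive_finite[OF finS sets])
    also have "\<dots> = (\<Sum>i\<in>S. p)"
    proof (rule sum.cong[OF refl])
      fix i assume "i \<in> S"
      then have "i \<in> {1..n}" using Sn by blast
      then show "measure (Bm p n) {y\<in>space (Bm p n). y i} = p" using p by (intro Bm_single) auto
    qed
    also have "\<dots> = p * m" by (simp add: m_def)
    finally have qpm: "q \<le> p * m" .
    have "q \<le> min 1 (p * m)" using q1 qpm by simp
    also have "\<dots> \<le> 8 * (p * m) / (4 * (p * m) + 1)" using p m1 by (intro num_bound) simp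
    also have "\<dots> = 2 * \<tau> m / (\<tau> m * (1 + 1 / (4 * p * real m)))"
      using aux_eq[of "p * real m" "\<tau> m"] tpos p m1 by (simp add: mult.assoc)
    also have "\<dots> \<le> 2 * \<tau> m / C"
    proof (rule divide_left_mono)
      show "C \<le> \<tau> m * (1 + 1 / (4 * p * real m))" using C(2) m1 by auto
      show "0 \<le> 2 * \<tau> m" using tpos by simp
      have "0 < 1 / (4 * p * real m)" using p m1 by simp
      then have "0 < 1 + 1 / (4 * p * real m)" by linarith
      then show "0 < \<tau> m * (1 + 1 / (4 * p * real m)) * C" using tpos C(1) by (intro mult_pos_pos) auto
    qed
    also have "\<dots> \<le> 2 / C * (b - a)" using tm C by (simp add: field_simps)
    finally show ?thesis by simp
  qed
  also have "\<dots> \<le> exp (2 / C * (b - a))" by (rule exp_ge_add_one_self)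
  finally show ?thesis unfolding q_def S_def by simp
qed


lemma Bm_meas: "(g :: _ \<Rightarrow> ennreal) \<in> borel_measurable (Bm p n)"
  by (rule measurableI) (auto intro!: Bm_sets)

context ctx begin

lemma tt_depS: "(\<forall>j\<le>k. \<xi> j = \<xi>' j) \<Longrightarrow> tt \<xi> (Suc k) = tt \<xi>' (Suc k)"
  using pr_dep[of k \<xi> \<xi>' A Orc] by (simp add: it_Suc)

lemma tt_dep: "(\<forall>j\<le>k. \<xi> j = \<xi>' j) \<Longrightarrow> tt \<xi> k = tt \<xi>' k"
proof (cases k)
  case (Suc m)
  assume h: "\<forall>j\<le>k. \<xi> j = \<xi>' j"
  then have "\<forall>j\<le>m. \<xi> j = \<xi>' j" using Suc by auto
  then show ?thesis using Suc tt_depS by blast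
qed (simp add: iterate_t_def)

lemma xx_dep: "(\<forall>j\<le>k. \<xi> j = \<xi>' j) \<Longrightarrow> xx \<xi> k = xx \<xi>' k"
  using pr_dep[of k \<xi> \<xi>' A Orc] by (simp add: iterate_x_def)

lemma Q_dep: "(\<forall>j\<le>k. \<xi> j = \<xi>' j) \<Longrightarrow> Q \<xi> k = Q \<xi>' k"
proof (induction k)
  case 0 then show ?case by simp
next
  case (Suc k)
  have a: "\<forall>j\<le>k. \<xi> j = \<xi>' j" using Suc.prems by auto
  have "succ \<xi> k = succ \<xi>' k"
    unfolding succ_def using tt_dep[OF a] tt_depS[OF a] Suc.prems by auto
  then show ?case using Suc.IH[OF a] by simp
qed

end

locale ctx2 = ctx +
  fixes C :: real
  assumes p: "0 < p" "p \<le> 1" and mono: "\<forall>i\<in>{1..<n}. \<tau> i \<le> \<tau> (Suc i)" and t1: "0 < \<tau> 1"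
    and C: "C > 0" "\<forall>m\<in>{1..n}. C \<le> \<tau> m * (1 + 1 / (4 * p * real m))" and tcap: "0 \<le> tcap"
begin

definition "\<Phi> \<xi> k = exp (real (Q \<xi> k) / 2 - 2 / C * min (tt \<xi> k) tcap)"

lemma inner:
  "(\<integral>\<^sup>+ y. ennreal (\<Phi> (x(Suc k := y)) (Suc k)) \<partial>Bm p n) \<le> ennreal (\<Phi> x k)"
proof -
  interpret B: prob_space "Bm p n" by (rule prob_Bm)
  define a where "a = tt x k"
  define b where "b = tt x (Suc k)"
  define c0 where "c0 = Q x k"
  define S where "S = {i\<in>{1..n}. a + \<tau> i \<le> b}"
  define E where "E = {y\<in>space (Bm p n). \<exists>i\<in>S. y i}"
  have ab: "a \<le> b" unfolding a_def b_def by (rule it_mono[OF alg])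
  have agree: "\<forall>j\<le>k. (x(Suc k := y)) j = x j" for y by simp
  have ta: "tt (x(Suc k := y)) k = a" for y unfolding a_def by (rule tt_dep[OF agree])
  have tb: "tt (x(Suc k := y)) (Suc k) = b" for y unfolding b_def by (rule tt_depS[OF agree])
  have qa: "Q (x(Suc k := y)) k = c0" for y unfolding c0_def by (rule Q_dep[OF agree])
  have sy: "succ (x(Suc k := y)) k \<longleftrightarrow> odd k \<and> b \<le> tcap \<and> (\<exists>i\<in>S. y i)" for y
    unfolding succ_def ta tb S_def by auto
  have Phik: "\<Phi> x k = exp (real c0 / 2 - 2 / C * min a tcap)" unfolding \<Phi>_def a_def c0_def ..
  show ?thesis
  proof (cases "odd k \<and> b \<le> tcap")
    case H: True
    define K where "K = exp (real c0 / 2 - 2 / C * b)"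
    have pt: "ennreal (\<Phi> (x(Suc k := y)) (Suc k)) \<le> ennreal K * (1 + indicator E y)"
      if y: "y \<in> space (Bm p n)" for y
    proof (cases "\<exists>i\<in>S. y i")
      case True
      then have "\<Phi> (x(Suc k := y)) (Suc k) = exp (real c0 / 2 - 2 / C * b + 1/2)"
        unfolding \<Phi>_def using H sy[of y] qa[of y] tb[of y] by (simp add: field_simps)
      also have "\<dots> = K * exp (1/2)" unfolding K_def by (simp add: exp_add)
      also have "\<dots> \<le> K * 2" unfolding K_def by (intro mult_left_mono exp_half_le2) simp
      finally have phi2: "\<Phi> (x(Suc k := y)) (Suc k) \<le> K * 2" .
      have ind: "indicator E y = (1::ennreal)" using True y unfolding E_def by simp
      have K0: "0 \<le> K" unfolding K_def by simp
      have eq2: "ennreal K * (1 + indicator E y) = ennreal (K * 2)"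
      proof -
        have "ennreal K * (1 + indicator E y) = ennreal K * ennreal 2" using ind by (simp add: one_add_one)
        also have "\<dots> = ennreal (K * 2)" using K0 by (simp add: ennreal_mult)
        finally show ?thesis .
      qed
      show ?thesis unfolding eq2 using phi2 by (intro ennreal_leI)
    next
      case False
      then have "\<Phi> (x(Suc k := y)) (Suc k) = K"
        unfolding \<Phi>_def K_def using H sy[of y] qa[of y] tb[of y] by simp
      moreover have "ennreal K * 1 \<le> ennreal K * (1 + indicator E y)" by (intro mult_left_mono) auto
      ultimately show ?thesis by simp
    qed
    have "(\<integral>\<^sup>+ y. ennreal (\<Phi> (x(Suc k := y)) (Suc k)) \<partial>Bm p n) \<le> (\<integral>\<^sup>+ y. ennreal K * (1 + indicator E y) \<partial>Bm p n)"
      by (rule nn_integral_mono) (rule pt)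
    also have "\<dots> = ennreal K * (\<integral>\<^sup>+ y. (1 + indicator E y) \<partial>Bm p n)"
      by (rule nn_integral_cmult) (rule Bm_meas)
    also have "(\<integral>\<^sup>+ y. (1 + indicator E y) \<partial>Bm p n) = 1 + emeasure (Bm p n) E"
    proof -
      have Es: "E \<in> sets (Bm p n)" unfolding E_def by (rule Bm_sets) auto
      have "(\<integral>\<^sup>+ y. (1 + indicator E y) \<partial>Bm p n) = (\<integral>\<^sup>+ y. 1 \<partial>Bm p n) + (\<integral>\<^sup>+ y. indicator E y \<partial>Bm p n)"
        by (rule nn_integral_add) (auto intro: Bm_meas)
      then show ?thesis using Es by (simp add: B.emeasure_space_1)
    qed
    also have "ennreal K * (1 + emeasure (Bm p n) E) = ennreal (K * (1 + measure (Bm p n) E))"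
    proof -
      have "ennreal (1 + measure (Bm p n) E) = 1 + ennreal (measure (Bm p n) E)"
        by (subst ennreal_plus) auto
      then show ?thesis unfolding K_def by (simp add: B.emeasure_eq_measure ennreal_mult)
    qed
    also have "\<dots> \<le> ennreal (\<Phi> x k)"
    proof (rule ennreal_leI)
      have "1 + measure (Bm p n) E \<le> exp (2 / C * (b - a))"
        unfolding E_def S_def using step_bound[OF p mono t1 C ab] .
      then have "K * (1 + measure (Bm p n) E) \<le> K * exp (2 / C * (b - a))"
        unfolding K_def by (intro mult_left_mono) auto
      also have "\<dots> = exp (real c0 / 2 - 2 / C * a)"
      proof -
        have "real c0 / 2 - 2 / C * b + 2 / C * (b - a) = real c0 / 2 - 2 / C * a" unfolding right_diff_distrib by linarith
        then show ?thesis unfolding K_def by (simp add: exp_add[symmetric])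
      qed
      also have "\<dots> = \<Phi> x k" using Phik H ab by (simp add: min_def)
      finally show "K * (1 + measure (Bm p n) E) \<le> \<Phi> x k" .
    qed
    finally show ?thesis .
  next
    case H: False
    have "\<Phi> (x(Suc k := y)) (Suc k) = exp (real c0 / 2 - 2 / C * min b tcap)" for y
      unfolding \<Phi>_def using H sy[of y] qa[of y] tb[of y] by auto
    then have "(\<integral>\<^sup>+ y. ennreal (\<Phi> (x(Suc k := y)) (Suc k)) \<partial>Bm p n) = ennreal (exp (real c0 / 2 - 2 / C * min b tcap))"
      by (simp add: B.emeasure_space_1)
    also have "\<dots> \<le> ennreal (\<Phi> x k)"
    proof (rule ennreal_leI)
      have "min a tcap \<le> min b tcap" using ab by simp
      then have "2 / C * min a tcap \<le> 2 / C * min b tcap" using C by (intro mult_left_mono) auto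
      then show "exp (real c0 / 2 - 2 / C * min b tcap) \<le> \<Phi> x k" unfolding Phik by simp
    qed
    finally show ?thesis .
  qed
qed

end


lemma emb_eq:
  fixes K :: nat
  assumes dep: "\<And>\<xi> \<xi>'. (\<forall>j\<le>K. \<xi> j = \<xi>' j) \<Longrightarrow> P \<xi> = P \<xi>'"
  shows "{\<xi>\<in>space (PiM UNIV (\<lambda>_. Bm p n)). P \<xi>} =
         prod_emb UNIV (\<lambda>_. Bm p n) {..K} {x\<in>space (PiM {..K} (\<lambda>_. Bm p n)). P x}"
proof -
  have r: "P (restrict \<xi> {..K}) = P \<xi>" for \<xi> by (rule dep) simp
  show ?thesis unfolding prod_emb_def space_PiM using r by auto
qed

lemma emb_sets:
  fixes K :: nat
  assumes dep: "\<And>\<xi> \<xi>'. (\<forall>j\<le>K. \<xi> j = \<xi>' j) \<Longrightarrow> P \<xi> = P \<xi>'"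
  shows "{\<xi>\<in>space (PiM UNIV (\<lambda>_. Bm p n)). P \<xi>} \<in> sets (PiM UNIV (\<lambda>_. Bm p n))"
  apply (subst emb_eq[OF dep])
   apply assumption
  by (rule measurable_prod_emb) (auto intro!: PiB_sets)

lemma emb_emeasure:
  fixes K :: nat
  assumes dep: "\<And>\<xi> \<xi>'. (\<forall>j\<le>K. \<xi> j = \<xi>' j) \<Longrightarrow> P \<xi> = P \<xi>'"
  shows "emeasure (PiM UNIV (\<lambda>_. Bm p n)) {\<xi>\<in>space (PiM UNIV (\<lambda>_. Bm p n)). P \<xi>} =
         emeasure (PiM {..K} (\<lambda>_. Bm p n)) {x\<in>space (PiM {..K} (\<lambda>_. Bm p n)). P x}"
proof -
  interpret product_prob_space "\<lambda>_. Bm p n" UNIV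
    by (intro product_prob_space.intro product_sigma_finite.intro product_prob_space_axioms.intro prob_space_imp_sigma_finite prob_Bm)
  have "{\<xi>\<in>space (PiM UNIV (\<lambda>_. Bm p n)). P \<xi>} =
         prod_emb UNIV (\<lambda>_. Bm p n) {..K} {x\<in>space (PiM {..K} (\<lambda>_. Bm p n)). P x}"
    by (rule emb_eq) (rule dep)
  then show ?thesis
    by (simp only:) (intro emeasure_PiM_emb' PiB_sets, auto)
qed

context ctx2 begin

lemma int_bound: "(\<integral>\<^sup>+ \<xi>. ennreal (\<Phi> \<xi> k) \<partial>PiM {..k} (\<lambda>_. Bm p n)) \<le> 1"
proof (induction k)
  case 0
  interpret P0: prob_space "PiM {..0::nat} (\<lambda>_. Bm p n)" by (intro prob_space_PiM prob_Bm)
  have "\<Phi> \<xi> 0 = 1" for \<xi> unfolding \<Phi>_def using tcap by (simp add: iterate_t_def)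
  moreover have "emeasure (PiM {..0::nat} (\<lambda>_. Bm p n)) (space (PiM {..0::nat} (\<lambda>_. Bm p n))) = 1"
    by (rule P0.emeasure_space_1)
  ultimately show ?case by simp
next
  case (Suc k)
  interpret product_prob_space "\<lambda>_. Bm p n" UNIV
    by (intro product_prob_space.intro product_sigma_finite.intro product_prob_space_axioms.intro prob_space_imp_sigma_finite prob_Bm)
  have "(\<integral>\<^sup>+ \<xi>. ennreal (\<Phi> \<xi> (Suc k)) \<partial>PiM {..Suc k} (\<lambda>_. Bm p n))
      = (\<integral>\<^sup>+ \<xi>. ennreal (\<Phi> \<xi> (Suc k)) \<partial>PiM (insert (Suc k) {..k}) (\<lambda>_. Bm p n))"
    by (simp add: atMost_Suc)
  also have "\<dots> = (\<integral>\<^sup>+ x. (\<integral>\<^sup>+ y. ennreal (\<Phi> (x(Suc k := y)) (Suc k)) \<partial>Bm p n) \<partial>PiM {..k} (\<lambda>_. Bm p n))"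
    by (rule product_nn_integral_insert) (auto intro: PiB_meas)
  also have "\<dots> \<le> (\<integral>\<^sup>+ x. ennreal (\<Phi> x k) \<partial>PiM {..k} (\<lambda>_. Bm p n))"
    by (intro nn_integral_mono inner)
  also have "\<dots> \<le> 1" by (rule Suc.IH)
  finally show ?case .
qed

lemma bad_fin:
  assumes d: "0 < \<delta>" and Tb: "2 / C * tcap \<le> real T / 2 + ln \<delta>"
  shows "emeasure (PiM {..K} (\<lambda>_. Bm p n)) {\<xi>\<in>space (PiM {..K} (\<lambda>_. Bm p n)). T \<le> Q \<xi> K} \<le> ennreal \<delta>"
proof -
  interpret PK: prob_space "PiM {..K} (\<lambda>_. Bm p n)" by (intro prob_space_PiM prob_Bm)
  define X where "X = {\<xi>\<in>space (PiM {..K} (\<lambda>_. Bm p n)). T \<le> Q \<xi> K}"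
  have Xs: "X \<in> sets (PiM {..K} (\<lambda>_. Bm p n))" unfolding X_def by (intro PiB_sets) auto
  have pt: "ennreal (1 / \<delta>) * indicator X \<xi> \<le> ennreal (\<Phi> \<xi> K)" for \<xi>
  proof (cases "\<xi> \<in> X")
    case True
    then have TQ: "real T \<le> real (Q \<xi> K)" unfolding X_def by simp
    have "min (tt \<xi> K) tcap \<le> tcap" by simp
    then have "2 / C * min (tt \<xi> K) tcap \<le> 2 / C * tcap" using C by (intro mult_left_mono) auto
    then have "- ln \<delta> \<le> real (Q \<xi> K) / 2 - 2 / C * min (tt \<xi> K) tcap" using Tb TQ by linarith
    then have "exp (- ln \<delta>) \<le> \<Phi> \<xi> K" unfolding \<Phi>_def by simp
    then have "1 / \<delta> \<le> \<Phi> \<xi> K" using d by (simp add: exp_minus inverse_eq_divide)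
    then show ?thesis using True by (simp add: ennreal_leI)
  next
    case False then show ?thesis by simp
  qed
  have "ennreal (1 / \<delta>) * emeasure (PiM {..K} (\<lambda>_. Bm p n)) X
      = (\<integral>\<^sup>+ \<xi>. ennreal (1 / \<delta>) * indicator X \<xi> \<partial>PiM {..K} (\<lambda>_. Bm p n))"
    using Xs by (simp add: nn_integral_cmult_indicator)
  also have "\<dots> \<le> (\<integral>\<^sup>+ \<xi>. ennreal (\<Phi> \<xi> K) \<partial>PiM {..K} (\<lambda>_. Bm p n))"
    by (intro nn_integral_mono pt)
  also have "\<dots> \<le> 1" by (rule int_bound)
  finally have h: "ennreal (1 / \<delta>) * ennreal (measure (PiM {..K} (\<lambda>_. Bm p n)) X) \<le> 1"
    by (simp add: PK.emeasure_eq_measure)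
  have e: "ennreal (1 / \<delta> * measure (PiM {..K} (\<lambda>_. Bm p n)) X) = ennreal (1 / \<delta>) * ennreal (measure (PiM {..K} (\<lambda>_. Bm p n)) X)"
    using d by (intro ennreal_mult) auto
  have "ennreal (1 / \<delta> * measure (PiM {..K} (\<lambda>_. Bm p n)) X) \<le> 1" unfolding e by (rule h)
  then have "1 / \<delta> * measure (PiM {..K} (\<lambda>_. Bm p n)) X \<le> 1"
    by (simp only: ennreal_le_1)
  then have "measure (PiM {..K} (\<lambda>_. Bm p n)) X \<le> \<delta>" using d by (simp add: field_simps)
  then show ?thesis unfolding X_def[symmetric] by (simp add: PK.emeasure_eq_measure ennreal_leI)
qed

end


theorem mainTheorem16:
  fixes f :: "(real,'n::{finite,linorder}) vec \<Rightarrow> real"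
    and \<tau> :: "nat \<Rightarrow> real" and n :: nat and p \<delta> t :: real
    and A :: "((real,'n) vec) list \<Rightarrow> real \<times> ((real,'n) vec)"
  assumes "\<forall>x. f differentiable (at x)"
    and "\<forall>x. prog (grad f x) \<le> prog x + 1"
    and "n \<ge> 1" and "0 < \<tau> 1" and "\<forall>i\<in>{1..<n}. \<tau> i \<le> \<tau> (Suc i)"
    and "0 < p" and "p \<le> 1"
    and "is_algorithm A"
    and "zero_respecting A (sync_oracle (G_bern p f) \<tau> n)"
    and "0 < \<delta>" and "\<delta> \<le> 1" and "0 \<le> t"
    and "t \<le> 1/2 * Min ((\<lambda>m. \<tau> m * (1 + 1 / (4 * p * real m)) *
                            (real CARD('n) / 2 + ln \<delta>)) ` {1..n})"
  shows "measure (draw_space p n)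
           {\<xi> \<in> space (draw_space p n).
              \<forall>k. iterate_t A (sync_oracle (G_bern p f) \<tau> n) \<xi> k \<le> t \<longrightarrow>
                  prog (iterate_x A (sync_oracle (G_bern p f) \<tau> n) \<xi> k) < CARD('n)}
         \<ge> 1 - \<delta>"
proof -
  note asm = assms
  define c where "c m = \<tau> m * (1 + 1 / (4 * p * real m))" for m
  define C where "C = Min (c ` {1..n})"
  define K0 where "K0 = real CARD('n) / 2 + ln \<delta>"
  have tpos: "0 < \<tau> m" if "m \<in> {1..n}" for m
    using tau_mono[OF asm(5), of 1 m] that asm(4) by auto
  have cpos: "0 < c m" if "m \<in> {1..n}" for m
  proof -
    have "0 < 1 / (4 * p * real m)" using that asm(6) by simp
    then have "0 < 1 + 1 / (4 * p * real m)" by linarith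
    then show ?thesis unfolding c_def using tpos[OF that] by simp
  qed
  have fin: "finite (c ` {1..n})" "c ` {1..n} \<noteq> {}" using asm(3) by auto
  have "C \<in> c ` {1..n}" unfolding C_def using fin by (rule Min_in)
  then obtain m1 where m1: "m1 \<in> {1..n}" "C = c m1" by auto
  have Cpos: "0 < C" using m1 cpos by simp
  have Cle: "\<forall>m\<in>{1..n}. C \<le> \<tau> m * (1 + 1 / (4 * p * real m))"
    using fin unfolding C_def c_def[symmetric] by auto
  have hM: "Min ((\<lambda>m. \<tau> m * (1 + 1 / (4 * p * real m)) * (real CARD('n) / 2 + ln \<delta>)) ` {1..n}) \<le> c m1 * K0"
    using m1 unfolding c_def K0_def by (intro Min_le) auto
  have tle: "t \<le> 1/2 * (C * K0)" unfolding m1(2) using asm(13) hM by linarith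
  have Tb: "2 / C * t \<le> real CARD('n) / 2 + ln \<delta>"
    using tle Cpos unfolding K0_def by (simp add: field_simps)
  interpret ctx2 f \<tau> n p A t C
    by (intro ctx2.intro ctx.intro ctx2_axioms.intro) (use asm Cpos Cle in auto)
  let ?M = "PiM UNIV (\<lambda>_. Bm p n)"
  interpret PM: product_prob_space "\<lambda>_. Bm p n" UNIV
    by (intro product_prob_space.intro product_sigma_finite.intro product_prob_space_axioms.intro prob_space_imp_sigma_finite prob_Bm)
  define T where "T = CARD('n)"
  define bad where "bad K = {\<xi>\<in>space ?M. T \<le> Q \<xi> K}" for K
  have bad_sets: "bad K \<in> sets ?M" for K
    unfolding bad_def by (rule emb_sets[where K=K]) (metis Q_dep)
  have bad_le: "emeasure ?M (bad K) \<le> ennreal \<delta>" for K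
  proof -
    have "emeasure ?M (bad K) = emeasure (PiM {..K} (\<lambda>_. Bm p n)) {\<xi>\<in>space (PiM {..K} (\<lambda>_. Bm p n)). T \<le> Q \<xi> K}"
      unfolding bad_def by (rule emb_emeasure[where K=K]) (metis Q_dep)
    also have "\<dots> \<le> ennreal \<delta>" using bad_fin[OF asm(10), of T K] Tb unfolding T_def by simp
    finally show ?thesis .
  qed
  have inc: "incseq bad"
    unfolding incseq_def bad_def using Q_mono order_trans by blast
  have U_sets: "(\<Union>K. bad K) \<in> sets ?M" using bad_sets by blast
  have "emeasure ?M (\<Union>K. bad K) = (SUP K. emeasure ?M (bad K))"
    using bad_sets inc by (intro SUP_emeasure_incseq[symmetric]) auto
  also have "\<dots> \<le> ennreal \<delta>" using bad_le by (intro SUP_least) auto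
  finally have "emeasure ?M (\<Union>K. bad K) \<le> ennreal \<delta>" .
  then have Ule: "measure ?M (\<Union>K. bad K) \<le> \<delta>"
    using asm(10) by (simp add: PM.emeasure_eq_measure)
  define good where "good = {\<xi> \<in> space ?M. \<forall>k. tt \<xi> k \<le> t \<longrightarrow> prog (xx \<xi> k) < CARD('n)}"
  define Gk where "Gk k = {\<xi> \<in> space ?M. tt \<xi> k \<le> t \<longrightarrow> prog (xx \<xi> k) < CARD('n)}" for k
  have Gk_sets: "Gk k \<in> sets ?M" for k
    unfolding Gk_def by (rule emb_sets[where K=k]) (metis tt_dep xx_dep)
  have "good = (\<Inter>k\<in>UNIV. Gk k)" unfolding good_def Gk_def by auto
  then have good_sets: "good \<in> sets ?M" using Gk_sets by auto
  have sub: "space ?M - (\<Union>K. bad K) \<subseteq> good"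
  proof
    fix \<xi> assume "\<xi> \<in> space ?M - (\<Union>K. bad K)"
    then have sp: "\<xi> \<in> space ?M" and nb: "\<And>K. Q \<xi> K < T" unfolding bad_def by (auto simp: not_le)
    have "prog (xx \<xi> k) < CARD('n)" if "tt \<xi> k \<le> t" for k
      using prog_xx_le[OF that] nb[of k] unfolding T_def by simp
    then show "\<xi> \<in> good" unfolding good_def using sp by auto
  qed
  have "1 - \<delta> \<le> 1 - measure ?M (\<Union>K. bad K)" using Ule by simp
  also have "\<dots> = measure ?M (space ?M - (\<Union>K. bad K))" using U_sets by (simp add: PM.prob_compl)
  also have "\<dots> \<le> measure ?M good" using sub good_sets by (intro PM.finite_measure_mono)
  finally show ?thesis unfolding good_def draw_space_eq .
qed

end
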